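(* Let $\sim$ (for each $N$) be an equivalence relation on $\{1,\dots,N\}^2$ with $(p,q)\sim(q,p)$ satisfying conditions (C2) and (C3). Let $k\ge 4$ be even, $\pi\in\mathcal B_{k/2}$, and suppose $\{m,m+1\}\in\pi$ with $1\le m\le k-2$; let $\tilde\pi:=\pi\setminus^\bullet\{m,m+1\}\in\mathcal B_{k/2-1}$. Then, as $N\to\infty$, $$\#\overline{E}^{(N)}_k(\pi)\le N\cdot\#\overline{E}^{(N)}_{k-2}(\tilde\pi)+o\big(N^{1+k/2}\big).$$
   Context: Conditions on $\sim$ (as $N\to\infty$): (C2) $\max_{p,q,r}\#\{s:(p,q)\sim(r,s)\}\le B<\infty$ with $B$ independent of $N$; (C3) $\#\{(p,q,r)\in\{1,\dots,N\}^3:(p,q)\sim(q,r),\ r\neq p\}=o(N^2)$. A pair-partition of $\{1,\dots,k\}$ is a partition all of whose blocks have exactly two elements; it is crossing if there exist $1\le a<b<c<d\le k$ with $\{a,c\},\{b,d\}\in\pi$, and non-crossing otherwise. For even $k$, $\mathcal B_{k/2}$ denotes the set of non-crossing pair-partitions of $\{1,\dots,k\}$. For $k\ge 4$, $\pi\in\mathcal B_{k/2}$ and a block $\{m,m+1\}\in\pi$ with $1\le m\le k-2$, $\pi\setminus^\bullet\{m,m+1\}\in\mathcal B_{k/2-1}$ denotes the pair-partition of $\{1,\dots,k-2\}$ obtained by deleting the block $\{m,m+1\}$ and relabelling every remaining element $a>m$ as $a-2$. $\pi$-adopted sequences. Let $\mathcal G$ be a countable set and $\pi\in\mathcal B_{k/2}$.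 A sequence $g=(g_1,\dots,g_k)\in\mathcal G^k$ is $\pi$-adopted, defined recursively in $k$: for $k=2$ (so $\pi=\{\{1,2\}\}$), iff $g_1\neq g_2$; for $k\ge 4$, iff for every block of $\pi$ of the form $\{m,m+1\}$ with $1\le m\le k-2$: (a) $g_m=g_{m+2}$ and $g_{m+1}\neq g_s$ for all $s\neq m+1$; and (b) $(g_1,\dots,g_m,g_{m+3},\dots,g_k)$ is $\pi\setminus^\bullet\{m,m+1\}$-adopted. For a partition $\pi$ of $\{1,\dots,k\}$, $\mathcal E^{(N)}_k(\pi)$ is the set of $i=(i_1,\dots,i_k)\in\{1,\dots,N\}^k$ such that, with $i_{k+1}:=i_1$, for all $l,m$: $l,m$ lie in the same block of $\pi$ iff $(i_l,i_{l+1})\sim(i_m,i_{m+1})$. For $\pi\in\mathcal B_{k/2}$, $\overline{E}^{(N)}_k(\pi)$ is the set of those $i\in\mathcal E^{(N)}_k(\pi)$ which are not $\pi$-adopted (as sequences in $\mathcal G^k$ with $\mathcal G=\{1,\dots,N\}$). *)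

theory Defs
  imports Main "HOL-Library.Landau_Symbols"
begin

definition pair_partition :: "nat \<Rightarrow> nat set set \<Rightarrow> bool" where
  "pair_partition k \<pi> \<longleftrightarrow>
     \<Union>\<pi> = {1..k} \<and> (\<forall>b\<in>\<pi>. card b = 2) \<and>
     (\<forall>b\<in>\<pi>. \<forall>c\<in>\<pi>. b \<noteq> c \<longrightarrow> b \<inter> c = {})"

definition crossing :: "nat set set \<Rightarrow> bool" where
  "crossing \<pi> \<longleftrightarrow> (\<exists>a b c d. a < b \<and> b < c \<and> c < d \<and> {a, c} \<in> \<pi> \<and> {b, d} \<in> \<pi>)"

text \<open>NCPP k \<pi> means: k is even and \<pi> belongs to B_{k/2}.\<close>
definition NCPP :: "nat \<Rightarrow> nat set set \<Rightarrow> bool" where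
  "NCPP k \<pi> \<longleftrightarrow> even k \<and> pair_partition k \<pi> \<and> \<not> crossing \<pi>"

definition remove_block :: "nat set set \<Rightarrow> nat \<Rightarrow> nat set set" where
  "remove_block \<pi> m =
     (\<lambda>b. (\<lambda>a. if a > m then a - 2 else a) ` b) ` (\<pi> - {{m, m + 1}})"

text \<open>Sequences g = (g_1,...,g_k) are lists with g_l = g ! (l - 1).
  Deleting entries g_{m+1}, g_{m+2} gives (g_1,...,g_m,g_{m+3},...,g_k).\<close>
definition del2 :: "nat \<Rightarrow> 'a list \<Rightarrow> 'a list" where
  "del2 m g = take m g @ drop (m + 2) g"

fun adopted_aux :: "nat \<Rightarrow> nat set set \<Rightarrow> 'a list \<Rightarrow> bool" where
  "adopted_aux 0 \<pi> g = False"
| "adopted_aux (Suc 0) \<pi> g = (g ! 0 \<noteq> g ! 1)"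
| "adopted_aux (Suc (Suc n)) \<pi> g =
     (\<forall>m. 1 \<le> m \<and> m \<le> length g - 2 \<and> {m, m + 1} \<in> \<pi> \<longrightarrow>
        (g ! (m - 1) = g ! (m + 1) \<and>
         (\<forall>s\<in>{1..length g}. s \<noteq> m + 1 \<longrightarrow> g ! m \<noteq> g ! (s - 1)) \<and>
         adopted_aux (Suc n) (remove_block \<pi> m) (del2 m g)))"

definition adopted :: "nat set set \<Rightarrow> 'a list \<Rightarrow> bool" where
  "adopted \<pi> g = adopted_aux (length g div 2) \<pi> g"

text \<open>The set E_k^(N)(pi): i_l = i ! (l - 1), and i_{l+1} = i ! (l mod k) (so i_{k+1} = i_1).\<close>
definition Eset :: "(nat \<Rightarrow> nat \<times> nat \<Rightarrow> nat \<times> nat \<Rightarrow> bool) \<Rightarrow> nat \<Rightarrow> nat \<Rightarrow> nat set set \<Rightarrow> nat list set" where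
  "Eset R N k \<pi> = {i. length i = k \<and> set i \<subseteq> {1..N} \<and>
     (\<forall>l\<in>{1..k}. \<forall>m\<in>{1..k}.
        (\<exists>b\<in>\<pi>. l \<in> b \<and> m \<in> b) \<longleftrightarrow>
        R N (i ! (l - 1), i ! (l mod k)) (i ! (m - 1), i ! (m mod k)))}"

definition Ebar :: "(nat \<Rightarrow> nat \<times> nat \<Rightarrow> nat \<times> nat \<Rightarrow> bool) \<Rightarrow> nat \<Rightarrow> nat \<Rightarrow> nat set set \<Rightarrow> nat list set" where
  "Ebar R N k \<pi> = {i \<in> Eset R N k \<pi>. \<not> adopted \<pi> i}"

end

theory Submission
  imports Defs
begin

lemma nth_del2: "j < length g - 2 \<Longrightarrow> del2 m g ! j = (if j < m then g ! j else g ! (j + 2))"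
  unfolding del2_def by (auto simp: nth_append min_def)

lemma length_del2: "length g \<ge> m + 2 \<Longrightarrow> length (del2 m g) = length g - 2"
  unfolding del2_def by auto

definition sh :: "nat \<Rightarrow> nat \<Rightarrow> nat" where "sh a x = (if x > a then x - 2 else x)"

lemma remove_block_sh: "remove_block \<pi> m = (\<lambda>b. sh m ` b) ` (\<pi> - {{m, m+1}})"
  unfolding remove_block_def sh_def by simp

definition DJ :: "nat set set \<Rightarrow> bool" where
  "DJ \<pi> \<longleftrightarrow> (\<forall>b\<in>\<pi>. \<forall>c\<in>\<pi>. b \<noteq> c \<longrightarrow> b \<inter> c = {})"

lemma inj_sh: "inj_on (sh m) (- {m, m+1})"
  unfolding inj_on_def sh_def by auto

lemma DJ_remove: assumes "DJ \<pi>" "{m, m+1} \<in> \<pi>" shows "DJ (remove_block \<pi> m)"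
  unfolding DJ_def remove_block_sh
proof (intro ballI impI)
  fix X Y assume X: "X \<in> (\<lambda>b. sh m ` b) ` (\<pi> - {{m, m + 1}})" and Y: "Y \<in> (\<lambda>b. sh m ` b) ` (\<pi> - {{m, m + 1}})"
    and ne: "X \<noteq> Y"
  from X obtain b where b: "b \<in> \<pi>" "b \<noteq> {m, m+1}" "X = sh m ` b" by auto
  from Y obtain c where c: "c \<in> \<pi>" "c \<noteq> {m, m+1}" "Y = sh m ` c" by auto
  have bc: "b \<inter> c = {}" using assms(1) b c ne unfolding DJ_def by metis
  have "b \<inter> {m, m+1} = {}" "c \<inter> {m, m+1} = {}" using assms b c unfolding DJ_def by metis+
  hence sub: "b \<union> c \<subseteq> - {m, m+1}" by auto
  have "sh m ` b \<inter> sh m ` c = sh m ` (b \<inter> c)"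
    using inj_on_image_Int[OF inj_sh, where A=b and B=c] sub by auto
  thus "X \<inter> Y = {}" using b c bc by simp
qed

definition adj :: "nat \<Rightarrow> nat \<Rightarrow> nat" where "adj x y = (if x < y then x else x - 2)"

lemma sh_comm: "a + 1 < b \<or> b + 1 < a \<Longrightarrow> sh (adj a b) (sh b x) = sh (adj b a) (sh a x)"
  unfolding sh_def adj_def by auto

lemma rb_rb: assumes D: "DJ \<pi>" and A: "{a, a+1} \<in> \<pi>" and B: "{b, b+1} \<in> \<pi>" and ab: "a + 1 < b \<or> b + 1 < a"
  shows "remove_block (remove_block \<pi> b) (adj a b) = (\<lambda>X. (\<lambda>x. sh (adj a b) (sh b x)) ` X) ` (\<pi> - {{a, a+1}, {b, b+1}})"
proof -
  let ?c = "adj a b"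
  have shA: "sh b ` {a, a+1} = {?c, ?c+1}" using ab unfolding sh_def adj_def by auto
  have eq: "(\<lambda>X. sh b ` X) ` (\<pi> - {{b, b+1}}) - {{?c, ?c+1}} = (\<lambda>X. sh b ` X) ` (\<pi> - {{a, a+1}, {b, b+1}})"
  proof
    show "(\<lambda>X. sh b ` X) ` (\<pi> - {{b, b+1}}) - {{?c, ?c+1}} \<subseteq> (\<lambda>X. sh b ` X) ` (\<pi> - {{a, a+1}, {b, b+1}})"
      using shA by auto
  next
    show "(\<lambda>X. sh b ` X) ` (\<pi> - {{a, a+1}, {b, b+1}}) \<subseteq> (\<lambda>X. sh b ` X) ` (\<pi> - {{b, b+1}}) - {{?c, ?c+1}}"
    proof
      fix Y assume "Y \<in> (\<lambda>X. sh b ` X) ` (\<pi> - {{a, a+1}, {b, b+1}})"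
      then obtain X where X: "X \<in> \<pi>" "X \<noteq> {a, a+1}" "X \<noteq> {b,b+1}" "Y = sh b ` X" by auto
      have d1: "X \<inter> {a, a+1} = {}" and d2: "X \<inter> {b, b+1} = {}" using D X A B unfolding DJ_def by metis+
      have "?c \<notin> sh b ` X"
      proof
        assume "?c \<in> sh b ` X"
        then obtain x where "x \<in> X" "sh b x = ?c" by auto
        hence "x = a \<or> x = a + 1 \<or> x = b \<or> x = b + 1" using ab unfolding sh_def adj_def
          by (simp split: if_splits; arith)
        with \<open>x \<in> X\<close> d1 d2 show False by auto
      qed
      thus "Y \<in> (\<lambda>X. sh b ` X) ` (\<pi> - {{b, b+1}}) - {{?c, ?c+1}}" using X by auto
    qed
  qed
  show ?thesis unfolding remove_block_sh eq image_image by simp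
qed

lemma rb_comm: assumes D: "DJ \<pi>" and A: "{a, a+1} \<in> \<pi>" and B: "{b, b+1} \<in> \<pi>" and ab: "a + 1 < b \<or> b + 1 < a"
  shows "remove_block (remove_block \<pi> b) (adj a b) = remove_block (remove_block \<pi> a) (adj b a)"
proof -
  have "remove_block (remove_block \<pi> a) (adj b a) = (\<lambda>X. (\<lambda>x. sh (adj b a) (sh a x)) ` X) ` (\<pi> - {{b, b+1}, {a, a+1}})"
    using rb_rb[OF D B A] ab by auto
  also have "\<dots> = (\<lambda>X. (\<lambda>x. sh (adj a b) (sh b x)) ` X) ` (\<pi> - {{a, a+1}, {b, b+1}})"
    using sh_comm[OF ab] by (simp add: insert_commute)
  finally show ?thesis using rb_rb[OF D A B ab] by simp
qed

lemma del2_comm: assumes "a + 1 < b \<or> b + 1 < a" "a + 2 \<le> length g" "b + 2 \<le> length g"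
  shows "del2 (adj a b) (del2 b g) = del2 (adj b a) (del2 a g)"
proof -
  have l1: "length (del2 b g) = length g - 2" "length (del2 a g) = length g - 2" using assms by (simp_all add: length_del2)
  have l2: "length (del2 (adj a b) (del2 b g)) = length g - 4" 
    using assms l1 length_del2[of "adj a b" "del2 b g"] unfolding adj_def by (auto split: if_splits)
  have l3: "length (del2 (adj b a) (del2 a g)) = length g - 4" 
    using assms l1 length_del2[of "adj b a" "del2 a g"] unfolding adj_def by (auto split: if_splits)
  show ?thesis
  proof (rule nth_equalityI)
    show "length (del2 (adj a b) (del2 b g)) = length (del2 (adj b a) (del2 a g))"
      using l2 l3 by simp
  next
    fix j assume "j < length (del2 (adj a b) (del2 b g))"
    hence j: "j < length g - 4" using l2 by simp
    show "del2 (adj a b) (del2 b g) ! j = del2 (adj b a) (del2 a g) ! j"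
      using assms j l1 by (auto simp add: nth_del2 adj_def)
  qed
qed

lemma sh_blk: "a + 1 < b \<or> b + 1 < a \<Longrightarrow> sh b ` {a, a+1} = {adj a b, adj a b + 1}"
  unfolding sh_def adj_def by auto

lemma blk_in_rb: "DJ \<pi> \<Longrightarrow> {a, a+1} \<in> \<pi> \<Longrightarrow> {b, b+1} \<in> \<pi> \<Longrightarrow> a + 1 < b \<or> b + 1 < a \<Longrightarrow>
   {adj a b, adj a b + 1} \<in> remove_block \<pi> b"
proof -
  assume a: "DJ \<pi>" "{a, a+1} \<in> \<pi>" "{b, b+1} \<in> \<pi>" "a + 1 < b \<or> b + 1 < a"
  have "{a, a+1} \<noteq> {b, b+1}" using a(4) by (auto simp: doubleton_eq_iff)
  hence "{a, a+1} \<in> \<pi> - {{b, b+1}}" using a by auto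
  thus ?thesis unfolding remove_block_sh using sh_blk[OF a(4)] by (metis rev_image_eqI)
qed

lemma DJ_D: "DJ \<pi> \<Longrightarrow> b \<in> \<pi> \<Longrightarrow> c \<in> \<pi> \<Longrightarrow> b \<noteq> c \<Longrightarrow> b \<inter> c = {}"
  by (simp add: DJ_def)
lemma conf:
  fixes g :: "'a list"
  shows "length g = 2*n + 4 \<Longrightarrow> DJ \<pi> \<Longrightarrow> {m, m+1} \<in> \<pi> \<Longrightarrow> 1 \<le> m \<Longrightarrow> m + 2 \<le> length g \<Longrightarrow>
    g!(m-1) = g!(m+1) \<Longrightarrow> (\<forall>s\<in>{1..length g}. s \<noteq> m+1 \<longrightarrow> g!m \<noteq> g!(s-1)) \<Longrightarrow>
    adopted_aux (Suc n) (remove_block \<pi> m) (del2 m g) \<Longrightarrow> adopted_aux (Suc (Suc n)) \<pi> g"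
proof (induction n arbitrary: \<pi> g m)
  case (0 \<pi> g m) 
  show ?case
  proof (subst adopted_aux.simps, intro allI impI)
    fix m' assume M': "1 \<le> m' \<and> m' \<le> length g - 2 \<and> {m', m' + 1} \<in> \<pi>"
    have "m' = m"
    proof (rule ccontr)
      assume "m' \<noteq> m"
      hence "{m', m'+1} \<noteq> {m, m+1}" by (auto simp: doubleton_eq_iff)
      hence "{m', m'+1} \<inter> {m, m+1} = {}" using DJ_D[OF "0.prems"(2) _ "0.prems"(3)] M' by blast
      thus False using M' "0.prems"(1,4,5) by auto
    qed
    thus "g ! (m' - 1) = g ! (m' + 1) \<and> (\<forall>s\<in>{1..length g}. s \<noteq> m' + 1 \<longrightarrow> g ! m' \<noteq> g ! (s - 1)) \<and>
          adopted_aux (Suc 0) (remove_block \<pi> m') (del2 m' g)" using "0.prems" by simp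
  qed
next
  case (Suc n0 \<pi> g m)
  note P = Suc.prems
  show ?case
  proof (subst adopted_aux.simps, intro allI impI)
    fix m' assume M': "1 \<le> m' \<and> m' \<le> length g - 2 \<and> {m', m' + 1} \<in> \<pi>"
    show "g ! (m' - 1) = g ! (m' + 1) \<and> (\<forall>s\<in>{1..length g}. s \<noteq> m' + 1 \<longrightarrow> g ! m' \<noteq> g ! (s - 1)) \<and>
          adopted_aux (Suc (Suc n0)) (remove_block \<pi> m') (del2 m' g)"
    proof (cases "m' = m")
      case True thus ?thesis using P by simp
    next
      case False
      hence "{m', m'+1} \<noteq> {m, m+1}" by (auto simp: doubleton_eq_iff)
      hence "{m', m'+1} \<inter> {m, m+1} = {}" using DJ_D[OF P(2) _ P(3)] M' by blast
      hence sep: "m' + 1 < m \<or> m + 1 < m'" using False by auto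
      define g' where "g' = del2 m g"
      define \<pi>' where "\<pi>' = remove_block \<pi> m"
      define m'' where "m'' = adj m' m"
      have lg': "length g' = length g - 2" using P unfolding g'_def by (simp add: length_del2)
      have nthg': "\<And>j. j < length g - 2 \<Longrightarrow> g' ! j = (if j < m then g ! j else g ! (j+2))"
        unfolding g'_def by (rule nth_del2)
      have m''blk: "{m'', m''+1} \<in> \<pi>'" unfolding m''_def \<pi>'_def
        by (rule blk_in_rb[OF P(2) _ P(3)]) (use M' sep in auto)
      have m''b: "1 \<le> m''" "m'' \<le> length g' - 2" using sep M' P lg' unfolding m''_def adj_def by auto
      have "adopted_aux (Suc (Suc n0)) \<pi>' g'" using P(8) unfolding \<pi>'_def g'_def by simp
      hence H0: "\<forall>mm. 1 \<le> mm \<and> mm \<le> length g' - 2 \<and> {mm, mm+1} \<in> \<pi>' \<longrightarrow>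
        (g' ! (mm - 1) = g' ! (mm + 1) \<and> (\<forall>s\<in>{1..length g'}. s \<noteq> mm + 1 \<longrightarrow> g' ! mm \<noteq> g' ! (s - 1)) \<and>
         adopted_aux (Suc n0) (remove_block \<pi>' mm) (del2 mm g'))" by (simp only: adopted_aux.simps)
      have H: "g' ! (m'' - 1) = g' ! (m'' + 1)" "\<forall>s\<in>{1..length g'}. s \<noteq> m'' + 1 \<longrightarrow> g' ! m'' \<noteq> g' ! (s - 1)"
        "adopted_aux (Suc n0) (remove_block \<pi>' m'') (del2 m'' g')"
        using H0[rule_format, of m''] m''blk m''b by blast+
      have nthA: "g' ! j = g ! j" if "j < m" "j < length g - 2" for j using nthg'[OF that(2)] that(1) by simp
      have nthB: "g' ! j = g ! (j + 2)" if "\<not> j < m" "j < length g - 2" for j using nthg'[OF that(2)] that(1) by simp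
      have G1: "g ! (m' - 1) = g ! (m' + 1)"
      proof (cases "m' + 1 < m")
        case True
        hence e: "m'' = m'" unfolding m''_def adj_def by simp
        have "g' ! (m' - 1) = g ! (m' - 1)" by (rule nthA) (use True P M' in arith)+
        moreover have "g' ! (m' + 1) = g ! (m' + 1)" by (rule nthA) (use True P M' in arith)+
        ultimately show ?thesis using H(1) e by simp
      next
        case False
        hence F: "m + 1 < m'" "m'' = m' - 2" using sep unfolding m''_def adj_def by auto
        have "g' ! (m'' + 1) = g ! (m'' + 1 + 2)" by (rule nthB) (use F P M' in arith)+
        moreover have "m'' + 1 + 2 = m' + 1" using F by arith
        moreover have "g' ! (m'' - 1) = g ! (m' - 1)"
        proof (cases "m' = m + 2")
          case True
          have "g' ! (m'' - 1) = g ! (m'' - 1)" by (rule nthA) (use F True P M' in arith)+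
          moreover have "m'' - 1 = m - 1" using F True by arith
          moreover have "m' - 1 = m + 1" using True by arith
          ultimately show ?thesis using P(6) by simp
        next
          case False
          have "g' ! (m'' - 1) = g ! (m'' - 1 + 2)" by (rule nthB) (use F False P M' in arith)+
          moreover have "m'' - 1 + 2 = m' - 1" using F False by arith
          ultimately show ?thesis by simp
        qed
        ultimately show ?thesis using H(1) by simp
      qed
      have gm': "g ! m' = g' ! m''"
      proof (cases "m' + 1 < m")
        case True
        hence e: "m'' = m'" unfolding m''_def adj_def by simp
        have "g' ! m' = g ! m'" by (rule nthA) (use True P M' in arith)+
        thus ?thesis using e by simp
      next
        case False
        hence F: "m + 1 < m'" "m'' = m' - 2" using sep unfolding m''_def adj_def by auto
        have "g' ! m'' = g ! (m'' + 2)" by (rule nthB) (use F P M' in arith)+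
        moreover have "m'' + 2 = m'" using F by arith
        ultimately show ?thesis by simp
      qed
      have U: "g ! m' \<noteq> g ! j" if j: "j < length g" "j \<noteq> m" "j \<noteq> m+1" "j \<noteq> m'" for j
      proof -
        define j' where "j' = (if j < m then j else j - 2)"
        have j'l: "j' < length g - 2" using j P unfolding j'_def by auto
        have "g ! j = g' ! j'"
        proof (cases "j < m")
          case True thus ?thesis using nthA[of j] j'l unfolding j'_def by simp
        next
          case False
          hence "j' = j - 2" "\<not> j' < m" "j' + 2 = j" using j unfolding j'_def by auto
          thus ?thesis using nthB[of j'] j'l by simp
        qed
        moreover have "j' + 1 \<noteq> m'' + 1" using j sep unfolding j'_def m''_def adj_def by auto
        hence "g' ! m'' \<noteq> g' ! (j' + 1 - 1)"
          using H(2) j'l lg' by auto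
        ultimately show ?thesis using gm' by simp
      qed
      have G2: "\<forall>s\<in>{1..length g}. s \<noteq> m' + 1 \<longrightarrow> g ! m' \<noteq> g ! (s - 1)"
      proof (intro ballI impI)
        fix s assume s: "s \<in> {1..length g}" "s \<noteq> m' + 1"
        consider "s - 1 = m" | "s - 1 = m + 1" | "s - 1 \<noteq> m \<and> s - 1 \<noteq> m + 1" by blast
        thus "g ! m' \<noteq> g ! (s - 1)"
        proof cases
          case 1
          have "g ! m \<noteq> g ! (m' + 1 - 1)" by (rule P(7)[rule_format]) (use M' sep in auto)
          thus ?thesis using 1 by simp
        next
          case 2
          have "g ! m' \<noteq> g ! (m - 1)" by (rule U) (use sep P(1,4,5) in arith)+
          thus ?thesis using 2 P(6) by simp
        next
          case 3 show ?thesis by (rule U) (use 3 s in auto)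
        qed
      qed
      define g2 where "g2 = del2 m' g"
      define \<pi>2 where "\<pi>2 = remove_block \<pi> m'"
      define m2 where "m2 = adj m m'"
      have lg2: "length g2 = length g - 2" using M' P unfolding g2_def by (simp add: length_del2)
      have nthg2: "\<And>j. j < length g - 2 \<Longrightarrow> g2 ! j = (if j < m' then g ! j else g ! (j+2))"
        unfolding g2_def by (rule nth_del2)
      have G3: "adopted_aux (Suc (Suc n0)) \<pi>2 g2"
      proof (rule Suc.IH)
        show "length g2 = 2 * n0 + 4" using lg2 P by simp
        show "DJ \<pi>2" unfolding \<pi>2_def using DJ_remove P(2) M' by blast
        show "{m2, m2 + 1} \<in> \<pi>2" unfolding m2_def \<pi>2_def
          by (rule blk_in_rb[OF P(2) P(3)]) (use M' sep in auto)
        show "1 \<le> m2" "m2 + 2 \<le> length g2" using sep M' P lg2 unfolding m2_def adj_def by auto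
        have nA: "g2 ! j = g ! j" if "j < m'" "j < length g - 2" for j using nthg2[OF that(2)] that(1) by simp
        have nB: "g2 ! j = g ! (j + 2)" if "\<not> j < m'" "j < length g - 2" for j using nthg2[OF that(2)] that(1) by simp
        show "g2 ! (m2 - 1) = g2 ! (m2 + 1)"
        proof (cases "m + 1 < m'")
          case True
          hence e: "m2 = m" unfolding m2_def adj_def by simp
          have "g2 ! (m - 1) = g ! (m - 1)" by (rule nA) (use True P M' in arith)+
          moreover have "g2 ! (m + 1) = g ! (m + 1)" by (rule nA) (use True P M' in arith)+
          ultimately show ?thesis using P(6) e by simp
        next
          case False
          hence F: "m' + 1 < m" "m2 = m - 2" using sep unfolding m2_def adj_def by auto
          have "g2 ! (m2 + 1) = g ! (m2 + 1 + 2)" by (rule nB) (use F P M' in arith)+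
          moreover have "m2 + 1 + 2 = m + 1" using F by arith
          moreover have "g2 ! (m2 - 1) = g ! (m - 1)"
          proof (cases "m = m' + 2")
            case True
            have "g2 ! (m2 - 1) = g ! (m2 - 1)" by (rule nA) (use F True P M' in arith)+
            moreover have "m2 - 1 = m' - 1" using F True by arith
            moreover have "m' + 1 = m - 1" using True by arith
            ultimately show ?thesis using G1 by simp
          next
            case False
            have "g2 ! (m2 - 1) = g ! (m2 - 1 + 2)" by (rule nB) (use F False P M' in arith)+
            moreover have "m2 - 1 + 2 = m - 1" using F False P(4) by arith
            ultimately show ?thesis by simp
          qed
          ultimately show ?thesis using P(6) by simp
        qed
        have g2m2: "g2 ! m2 = g ! m"
        proof (cases "m + 1 < m'")
          case True
          hence e: "m2 = m" unfolding m2_def adj_def by simp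
          have "g2 ! m = g ! m" by (rule nA) (use True P M' in arith)+
          thus ?thesis using e by simp
        next
          case False
          hence F: "m' + 1 < m" "m2 = m - 2" using sep unfolding m2_def adj_def by auto
          have "g2 ! m2 = g ! (m2 + 2)" by (rule nB) (use F P M' in arith)+
          moreover have "m2 + 2 = m" using F by arith
          ultimately show ?thesis by simp
        qed
        show "\<forall>s\<in>{1..length g2}. s \<noteq> m2 + 1 \<longrightarrow> g2 ! m2 \<noteq> g2 ! (s - 1)"
        proof (intro ballI impI)
          fix s assume s: "s \<in> {1..length g2}" "s \<noteq> m2 + 1"
          define j where "j = (if s - 1 < m' then s - 1 else s + 1)"
          have sl: "s - 1 < length g - 2" using s lg2 by auto
          have "g2 ! (s - 1) = g ! j"
          proof (cases "s - 1 < m'")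
            case True thus ?thesis using nA[OF True sl] unfolding j_def by simp
          next
            case False thus ?thesis using nB[OF False sl] s unfolding j_def by simp
          qed
          moreover have "j \<noteq> m" using s sep unfolding j_def m2_def adj_def by auto
          hence "g ! m \<noteq> g ! (j + 1 - 1)"
            by (intro P(7)[rule_format]) (use s lg2 sl P(1) j_def in auto)
          ultimately show "g2 ! m2 \<noteq> g2 ! (s - 1)" using g2m2 by simp
        qed
        have "remove_block \<pi>2 m2 = remove_block \<pi>' m''"
          unfolding \<pi>2_def \<pi>'_def m2_def m''_def by (rule rb_comm[OF P(2) P(3)]) (use M' sep in auto)
        moreover have "del2 m2 g2 = del2 m'' g'"
          unfolding g2_def g'_def m2_def m''_def by (rule del2_comm) (use M' sep P in auto)
        ultimately show "adopted_aux (Suc n0) (remove_block \<pi>2 m2) (del2 m2 g2)" using H(3) by simp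
      qed
      show ?thesis using G1 G2 G3 unfolding g2_def \<pi>2_def by simp
    qed
  qed
qed

definition ext :: "'a list set \<Rightarrow> nat \<Rightarrow> 'a list \<Rightarrow> 'a set" where
  "ext A t p = {x. \<exists>w\<in>A. take t w = p \<and> w ! t = x}"

lemma count_step:
  assumes fin: "finite A" and len: "\<forall>w\<in>A. length w = n" and t: "t < n"
    and bnd: "\<And>p. card (ext A t p) \<le> F"
  shows "card (take (Suc t) ` A) \<le> card (take t ` A) * F"
proof -
  have sub: "take (Suc t) ` A \<subseteq> (\<lambda>(p, x). p @ [x]) ` (SIGMA p:take t ` A. ext A t p)"
  proof
    fix y assume "y \<in> take (Suc t) ` A"
    then obtain w where w: "w \<in> A" "y = take (Suc t) w" by auto
    have "y = take t w @ [w ! t]" using w len t by (simp add: take_Suc_conv_app_nth)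
    moreover have "(take t w, w ! t) \<in> (SIGMA p:take t ` A. ext A t p)" using w unfolding ext_def by auto
    ultimately show "y \<in> (\<lambda>(p, x). p @ [x]) ` (SIGMA p:take t ` A. ext A t p)" by force
  qed
  have finext: "\<forall>p\<in>take t ` A. finite (ext A t p)"
  proof
    fix p have "ext A t p \<subseteq> (\<lambda>w. w ! t) ` A" unfolding ext_def by auto
    thus "finite (ext A t p)" using fin finite_subset by blast
  qed
  have "card (take (Suc t) ` A) \<le> card ((\<lambda>(p, x). p @ [x]) ` (SIGMA p:take t ` A. ext A t p))"
    by (rule card_mono) (use fin finext sub in auto)
  also have "\<dots> \<le> card (SIGMA p:take t ` A. ext A t p)" by (rule card_image_le) (use fin finext in auto)
  also have "\<dots> = (\<Sum>p\<in>take t ` A. card (ext A t p))" using fin finext by simp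
  also have "\<dots> \<le> card (take t ` A) * F" using sum_bounded_above[of "take t ` A" "\<lambda>p. card (ext A t p)" F] bnd by simp
  finally show ?thesis .
qed

lemma count_prefix:
  assumes fin: "finite A" and len: "\<forall>w\<in>A. length w = n" and jn: "j \<le> n"
    and bnd: "\<And>t p. j \<le> t \<Longrightarrow> t < n \<Longrightarrow> card (ext A t p) \<le> f t"
  shows "card A \<le> card (take j ` A) * (\<Prod>t\<in>{j..<n}. f t)"
proof -
  have main: "j + d \<le> n \<Longrightarrow> card (take (j + d) ` A) \<le> card (take j ` A) * (\<Prod>t\<in>{j..<j+d}. f t)" for d
  proof (induction d)
    case 0 thus ?case by simp
  next
    case (Suc d)
    have "card (take (Suc (j + d)) ` A) \<le> card (take (j + d) ` A) * f (j + d)"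
      by (rule count_step[OF fin len]) (use Suc.prems bnd in auto)
    also have "\<dots> \<le> card (take j ` A) * (\<Prod>t\<in>{j..<j+d}. f t) * f (j + d)"
      using Suc by (intro mult_right_mono) auto
    also have "\<dots> = card (take j ` A) * (\<Prod>t\<in>{j..<j + Suc d}. f t)" by (simp add: prod.atLeastLessThan_Suc)
    finally show ?case by simp
  qed
  have "take n ` A = A"
  proof -
    have "\<forall>w\<in>A. take n w = w" using len by simp
    thus ?thesis by (simp add: image_cong)
  qed
  thus ?thesis using main[of "n - j"] jn by simp
qed

lemma inj_rotate: "inj (rotate n)"
proof (induction n)
  case 0 thus ?case by simp
next
  case (Suc n)
  have e: "rotate (Suc n) = rotate1 \<circ> rotate n" by (rule ext) simp
  show ?case unfolding e by (rule inj_compose[OF inj_rotate1 Suc.IH])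
qed

definition posr :: "nat \<Rightarrow> nat \<Rightarrow> nat \<Rightarrow> nat" where "posr k d u = (u + d) mod k + 1"

lemma posr_range: "k > 0 \<Longrightarrow> posr k d u \<in> {1..k}"
  unfolding posr_def by (auto simp: Suc_le_eq)

lemma pair_rot:
  assumes "length i = k" "u < k"
  shows "i ! (posr k d u - 1) = rotate d i ! u" "i ! (posr k d u mod k) = rotate d i ! ((u + 1) mod k)"
proof -
  have k: "k > 0" using assms by simp
  show "i ! (posr k d u - 1) = rotate d i ! u" using assms by (simp add: nth_rotate posr_def add.commute)
  have "posr k d u mod k = (u + d + 1) mod k" unfolding posr_def by (simp add: mod_Suc_eq)
  moreover have "rotate d i ! ((u + 1) mod k) = i ! ((d + (u + 1) mod k) mod k)"
    using assms k by (simp add: nth_rotate)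
  moreover have "(d + (u + 1) mod k) mod k = (u + d + 1) mod k" by (simp add: mod_add_right_eq add.commute add.left_commute)
  ultimately show "i ! (posr k d u mod k) = rotate d i ! ((u + 1) mod k)" by simp
qed

lemma R_rot:
  assumes i: "i \<in> Eset R N k \<pi>" and k: "k > 0" and uv: "u < k" "v < k"
    and b: "b \<in> \<pi>" "posr k d u \<in> b" "posr k d v \<in> b"
  shows "R N (rotate d i ! u, rotate d i ! ((u + 1) mod k)) (rotate d i ! v, rotate d i ! ((v + 1) mod k))"
proof -
  have len: "length i = k" using i unfolding Eset_def by simp
  have "R N (i ! (posr k d u - 1), i ! (posr k d u mod k)) (i ! (posr k d v - 1), i ! (posr k d v mod k))"
    using i posr_range[OF k, of d u] posr_range[OF k, of d v] b unfolding Eset_def by blast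
  thus ?thesis using pair_rot[OF len uv(1)] pair_rot[OF len uv(2)] by simp
qed

lemma rot_set: "i \<in> Eset R N k \<pi> \<Longrightarrow> set (rotate d i) \<subseteq> {1..N}"
  unfolding Eset_def by simp

lemma ext_bdd:
  assumes A: "A \<subseteq> Eset R N k \<pi>" and k: "k > 0" and t: "1 \<le> t" "t < k" and u: "u < t - 1"
    and b: "b \<in> \<pi>" "posr k d u \<in> b" "posr k d (t - 1) \<in> b"
    and C2N: "\<forall>p q r. p \<in> {1..N} \<longrightarrow> q \<in> {1..N} \<longrightarrow> r \<in> {1..N} \<longrightarrow> card {s \<in> {1..N}. R N (p, q) (r, s)} \<le> B"
  shows "card (ext (rotate d ` A) t p) \<le> B"
proof (cases "ext (rotate d ` A) t p = {}")
  case True thus ?thesis by simp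
next
  case False
  then obtain w0 where w0: "w0 \<in> rotate d ` A" "take t w0 = p" unfolding ext_def by auto
  then obtain i0 where i0: "i0 \<in> A" "w0 = rotate d i0" by auto
  have li0: "length w0 = k" using i0 A unfolding Eset_def by auto
  have sw0: "set w0 \<subseteq> {1..N}" using i0 A rot_set by blast
  have pj: "p ! j \<in> {1..N}" if "j < t" for j
  proof -
    have "p ! j = w0 ! j" using w0 that by auto
    moreover have "w0 ! j \<in> set w0" using li0 that t by auto
    ultimately show ?thesis using sw0 by auto
  qed
  have pin: "p ! u \<in> {1..N}" "p ! (u+1) \<in> {1..N}" "p ! (t - 1) \<in> {1..N}"
    using pj u t by auto
  have "ext (rotate d ` A) t p \<subseteq> {s \<in> {1..N}. R N (p ! u, p ! (u+1)) (p ! (t - 1), s)}"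
  proof
    fix x assume "x \<in> ext (rotate d ` A) t p"
    then obtain w where w: "w \<in> rotate d ` A" "take t w = p" "w ! t = x" unfolding ext_def by auto
    then obtain i where i: "i \<in> A" "w = rotate d i" by auto
    have lw: "length w = k" using i A unfolding Eset_def by auto
    have sw: "set w \<subseteq> {1..N}" using i A rot_set by blast
    have "w ! t \<in> set w" using lw t by auto
    hence "x \<in> {1..N}" using w sw by auto
    moreover have "R N (w ! u, w ! ((u + 1) mod k)) (w ! (t - 1), w ! ((t - 1 + 1) mod k))"
      using R_rot[of i R N k \<pi> u "t - 1" b d] i A k u t b by auto
    moreover have "(u + 1) mod k = u + 1" "(t - 1 + 1) mod k = t" using u t by auto
    moreover have "w ! u = p ! u" "w ! (u+1) = p ! (u+1)" "w ! (t - 1) = p ! (t - 1)" using w u t by auto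
    ultimately show "x \<in> {s \<in> {1..N}. R N (p ! u, p ! (u+1)) (p ! (t - 1), s)}" using w by auto
  qed
  hence "card (ext (rotate d ` A) t p) \<le> card {s \<in> {1..N}. R N (p ! u, p ! (u+1)) (p ! (t - 1), s)}"
    by (intro card_mono) auto
  also have "\<dots> \<le> B" using C2N pin by blast
  finally show ?thesis .
qed

lemma ext_free:
  assumes A: "A \<subseteq> Eset R N k \<pi>" and t: "t < k"
  shows "card (ext (rotate d ` A) t p) \<le> N"
proof -
  have "ext (rotate d ` A) t p \<subseteq> {1..N}"
  proof
    fix x assume "x \<in> ext (rotate d ` A) t p"
    then obtain w where w: "w \<in> rotate d ` A" "w ! t = x" unfolding ext_def by auto
    then obtain i where i: "i \<in> A" "w = rotate d i" by auto
    have lw: "length w = k" using i A unfolding Eset_def by auto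
    have sw: "set w \<subseteq> {1..N}" using i A rot_set by blast
    have "w ! t \<in> set w" using lw t by auto
    thus "x \<in> {1..N}" using w sw by auto
  qed
  thus ?thesis using card_mono[of "{1..N}"] by fastforce
qed

lemma pp_finite: "pair_partition k \<pi> \<Longrightarrow> finite \<pi>"
proof -
  assume "pair_partition k \<pi>"
  hence "\<pi> \<subseteq> Pow {1..k}" unfolding pair_partition_def by auto
  thus "finite \<pi>" using finite_subset by blast
qed

lemma pp_card: assumes "pair_partition k \<pi>" shows "2 * card \<pi> = k"
proof -
  have pw: "pairwise disjnt \<pi>" using assms unfolding pair_partition_def pairwise_def disjnt_def by blast
  have fin: "\<And>b. b \<in> \<pi> \<Longrightarrow> finite b" using assms unfolding pair_partition_def by (metis card.infinite zero_neq_numeral)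
  have "card (\<Union>\<pi>) = sum card \<pi>" by (rule card_Union_disjoint[OF pw fin])
  also have "\<dots> = sum (\<lambda>_. 2) \<pi>" using assms unfolding pair_partition_def by (intro sum.cong) auto
  also have "\<dots> = 2 * card \<pi>" by simp
  finally show ?thesis using assms unfolding pair_partition_def by simp
qed

definition bdd :: "nat \<Rightarrow> nat \<Rightarrow> nat set set \<Rightarrow> nat \<Rightarrow> bool" where
  "bdd k d \<pi> t \<longleftrightarrow> (\<exists>u<t-1. \<exists>b\<in>\<pi>. posr k d u \<in> b \<and> posr k d (t - 1) \<in> b)"

lemma free_count:
  assumes pp: "pair_partition k \<pi>" and k: "k > 0" and B0: "B0 \<in> \<pi>" and S: "S \<subseteq> {1..<k}"
    and nb: "\<forall>t\<in>S. posr k d (t - 1) \<notin> B0"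
  shows "card {t\<in>S. \<not> bdd k d \<pi> t} \<le> card \<pi> - 1"
proof -
  let ?Fr = "{t\<in>S. \<not> bdd k d \<pi> t}"
  define h where "h t = (SOME b. b \<in> \<pi> \<and> posr k d (t - 1) \<in> b)" for t
  have hex: "h t \<in> \<pi> \<and> posr k d (t - 1) \<in> h t" for t
  proof -
    have "posr k d (t - 1) \<in> \<Union>\<pi>" using posr_range[OF k] pp unfolding pair_partition_def by auto
    then obtain b where "b \<in> \<pi>" "posr k d (t - 1) \<in> b" by auto
    hence "\<exists>b. b \<in> \<pi> \<and> posr k d (t - 1) \<in> b" by blast
    thus ?thesis unfolding h_def by (rule someI_ex)
  qed
  have inj: "inj_on h ?Fr"
  proof (rule inj_onI, rule ccontr)
    fix t1 t2 assume t1: "t1 \<in> ?Fr" and t2: "t2 \<in> ?Fr" and e: "h t1 = h t2" and ne: "t1 \<noteq> t2"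
    have b1: "posr k d (t1 - 1) \<in> h t2" using hex[of t1] e by simp
    have b2: "posr k d (t2 - 1) \<in> h t2" "h t2 \<in> \<pi>" using hex[of t2] by auto
    have ge: "1 \<le> t1" "1 \<le> t2" using t1 t2 S by auto
    show False
    proof (cases "t1 < t2")
      case True
      hence "bdd k d \<pi> t2" unfolding bdd_def using b1 b2 ge by (intro exI[of _ "t1 - 1"]) auto
      thus False using t2 by simp
    next
      case False
      hence "t2 < t1" using ne by simp
      hence "bdd k d \<pi> t1" unfolding bdd_def using b1 b2 ge hex[of t1] e by (intro exI[of _ "t2 - 1"]) auto
      thus False using t1 by simp
    qed
  qed
  have img: "h ` ?Fr \<subseteq> \<pi> - {B0}" using hex nb by auto
  have "card ?Fr = card (h ` ?Fr)" using card_image[OF inj] by simp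
  also have "\<dots> \<le> card (\<pi> - {B0})" by (rule card_mono) (use img pp_finite[OF pp] in auto)
  also have "\<dots> = card \<pi> - 1" using B0 pp_finite[OF pp] by simp
  finally show ?thesis .
qed

lemma prod_bound:
  fixes N B K c :: nat
  assumes fin: "finite S" and N: "N \<ge> 1" and B: "B \<ge> 1" and c: "card {t\<in>S. \<not> P t} \<le> c" and cS: "card S \<le> K"
  shows "(\<Prod>t\<in>S. if P t then B else N) \<le> B ^ K * N ^ c"
proof -
  have "(\<Prod>t\<in>S. if P t then B else N) = (\<Prod>t\<in>S \<inter> {t. P t}. B) * (\<Prod>t\<in>S - {t. P t}. N)"
    using prod.If_cases[OF fin, of P "\<lambda>_. B" "\<lambda>_. N"] by (simp add: Diff_eq)
  also have "\<dots> = B ^ card (S \<inter> {t. P t}) * N ^ card (S - {t. P t})" by simp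
  also have "\<dots> \<le> B ^ K * N ^ c"
  proof (intro mult_mono)
    have "card (S \<inter> {t. P t}) \<le> K" using cS card_mono[OF fin, of "S \<inter> {t. P t}"] by auto
    thus "B ^ card (S \<inter> {t. P t}) \<le> B ^ K" using B by (intro power_increasing) auto
    have "S - {t. P t} = {t\<in>S. \<not> P t}" by auto
    thus "N ^ card (S - {t. P t}) \<le> N ^ c" using N c by (intro power_increasing) auto
  qed auto
  finally show ?thesis .
qed

lemma modlem: "(a::nat) < 2 * k \<Longrightarrow> a mod k = (if a < k then a else a - k)"
  by (simp add: le_mod_geq)

lemma take3: "length w \<ge> 3 \<Longrightarrow> take 3 w = [w ! 0, w ! 1, w ! 2]"
  by (rule nth_equalityI) (auto simp: less_Suc_eq numeral_3_eq_3 numeral_2_eq_2)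

lemma take1: "length w \<ge> 1 \<Longrightarrow> take 1 w = [w ! 0]"
  by (cases w) auto

lemma Eset_finite: "finite (Eset R N k \<pi>)"
proof -
  have "Eset R N k \<pi> \<subseteq> {xs. set xs \<subseteq> {1..N} \<and> length xs = k}" unfolding Eset_def by auto
  thus ?thesis using finite_lists_length_eq[of "{1..N}" k] finite_subset by auto
qed

lemma Eset_R:
  assumes "i \<in> Eset R N k \<pi>" "l \<in> {1..k}" "l' \<in> {1..k}" "b \<in> \<pi>" "l \<in> b" "l' \<in> b"
  shows "R N (i ! (l - 1), i ! (l mod k)) (i ! (l' - 1), i ! (l' mod k))"
  using assms unfolding Eset_def by blast

definition TS :: "(nat \<Rightarrow> nat \<times> nat \<Rightarrow> nat \<times> nat \<Rightarrow> bool) \<Rightarrow> nat \<Rightarrow> (nat \<times> nat \<times> nat) set" where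
  "TS R N = {(p, q, r). p \<in> {1..N} \<and> q \<in> {1..N} \<and> r \<in> {1..N} \<and> R N (p, q) (q, r) \<and> r \<noteq> p}"

lemma TS_finite: "finite (TS R N)"
proof -
  have "TS R N \<subseteq> {1..N} \<times> {1..N} \<times> {1..N}" unfolding TS_def by auto
  thus ?thesis using finite_subset by blast
qed

lemma caseA_bound:
  assumes pp: "pair_partition k \<pi>" and k: "k \<ge> 4" and blk: "{m, m+1} \<in> \<pi>" "1 \<le> m" "m \<le> k - 2"
    and N: "N \<ge> 1" and B: "B \<ge> 1"
    and C2N: "\<forall>p q r. p \<in> {1..N} \<longrightarrow> q \<in> {1..N} \<longrightarrow> r \<in> {1..N} \<longrightarrow> card {s \<in> {1..N}. R N (p, q) (r, s)} \<le> B"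
  shows "card {i \<in> Eset R N k \<pi>. i ! (m - 1) \<noteq> i ! (m + 1)} \<le> card (TS R N) * (B ^ k * N ^ (k div 2 - 1))"
proof -
  define CA where "CA = {i \<in> Eset R N k \<pi>. i ! (m - 1) \<noteq> i ! (m + 1)}"
  define d where "d = m - 1"
  define A' where "A' = rotate d ` CA"
  have CAE: "CA \<subseteq> Eset R N k \<pi>" unfolding CA_def by auto
  have finCA: "finite CA" using Eset_finite CAE finite_subset by blast
  have cardA: "card CA = card A'" unfolding A'_def by (rule card_image[symmetric]) (meson inj_rotate inj_on_subset subset_UNIV)
  have finA: "finite A'" unfolding A'_def using finCA by simp
  have lenA: "\<forall>w\<in>A'. length w = k" unfolding A'_def using CAE unfolding Eset_def by auto
  define f where "f t = (if bdd k d \<pi> t then B else N)" for t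
  have k0: "k > 0" using k by simp
  have "card A' \<le> card (take 3 ` A') * (\<Prod>t\<in>{3..<k}. f t)"
  proof (rule count_prefix[OF finA lenA])
    show "3 \<le> k" using k by simp
    fix t p assume t: "3 \<le> t" "t < k"
    show "card (ext A' t p) \<le> f t"
    proof (cases "bdd k d \<pi> t")
      case True
      then obtain u b where ub: "u < t - 1" "b \<in> \<pi>" "posr k d u \<in> b" "posr k d (t - 1) \<in> b"
        unfolding bdd_def by blast
      have "card (ext (rotate d ` CA) t p) \<le> B"
        by (rule ext_bdd[OF CAE k0 _ t(2) ub C2N]) (use t in simp)
      thus ?thesis using True unfolding f_def A'_def by simp
    next
      case False
      have "card (ext (rotate d ` CA) t p) \<le> N" by (rule ext_free[OF CAE t(2)])
      thus ?thesis using False unfolding f_def A'_def by simp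
    qed
  qed
  also have "card (take 3 ` A') \<le> card (TS R N)"
  proof -
    have "take 3 ` A' \<subseteq> (\<lambda>(p, q, r). [p, q, r]) ` TS R N"
    proof
      fix y assume "y \<in> take 3 ` A'"
      then obtain i where i: "i \<in> CA" "y = take 3 (rotate d i)" unfolding A'_def by auto
      have iE: "i \<in> Eset R N k \<pi>" and ne: "i ! (m - 1) \<noteq> i ! (m + 1)" using i unfolding CA_def by auto
      have li: "length i = k" using iE unfolding Eset_def by simp
      have si: "set i \<subseteq> {1..N}" using iE unfolding Eset_def by simp
      have r0: "rotate d i ! 0 = i ! (m - 1)" using li k blk unfolding d_def by (simp add: nth_rotate)
      have r1: "rotate d i ! 1 = i ! m" using li k blk unfolding d_def by (simp add: nth_rotate)
      have r2: "rotate d i ! 2 = i ! (m + 1)" using li k blk unfolding d_def by (simp add: nth_rotate)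
      have y: "y = [i ! (m - 1), i ! m, i ! (m + 1)]" using i take3[of "rotate d i"] li k r0 r1 r2 by simp
      have RR: "R N (i ! (m - 1), i ! (m mod k)) (i ! (m + 1 - 1), i ! ((m + 1) mod k))"
        by (rule Eset_R[OF iE _ _ blk(1)]) (use blk k in auto)
      have inN: "i ! j \<in> {1..N}" if "j < k" for j using si li that nth_mem by blast
      have "(i ! (m - 1), i ! m, i ! (m + 1)) \<in> TS R N"
        unfolding TS_def using RR blk k li ne inN[of "m - 1"] inN[of m] inN[of "m+1"] by auto
      thus "y \<in> (\<lambda>(p, q, r). [p, q, r]) ` TS R N" using y by force
    qed
    hence "card (take 3 ` A') \<le> card ((\<lambda>(p, q, r). [p, q, r]) ` TS R N)"
      by (intro card_mono) (auto simp: TS_finite)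
    also have "\<dots> \<le> card (TS R N)" by (rule card_image_le[OF TS_finite])
    finally show ?thesis .
  qed
  hence "card (take 3 ` A') * (\<Prod>t\<in>{3..<k}. f t) \<le> card (TS R N) * (\<Prod>t\<in>{3..<k}. f t)"
    by (rule mult_right_mono) simp
  also have "(\<Prod>t\<in>{3..<k}. f t) \<le> B ^ k * N ^ (card \<pi> - 1)"
    unfolding f_def
  proof (rule prod_bound[OF _ N B])
    show "card {t \<in> {3..<k}. \<not> bdd k d \<pi> t} \<le> card \<pi> - 1"
    proof (rule free_count[OF pp k0 blk(1)])
      show "{3..<k} \<subseteq> {1..<k}" by auto
      show "\<forall>t\<in>{3..<k}. posr k d (t - 1) \<notin> {m, m + 1}"
      proof
        fix t assume t: "t \<in> {3..<k}"
        have "t - 1 + d < 2 * k" using t blk unfolding d_def by auto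
        thus "posr k d (t - 1) \<notin> {m, m + 1}" unfolding posr_def using modlem[of "t - 1 + d" k] t blk
          unfolding d_def by (auto split: if_splits)
      qed
    qed
  qed auto
  also have "card \<pi> - 1 = k div 2 - 1" using pp_card[OF pp] by simp
  finally show ?thesis using cardA unfolding CA_def by (simp add: mult_left_mono)
qed


lemma caseB_bound:
  assumes pp: "pair_partition k \<pi>" and k: "k \<ge> 4" and blk: "{m, m+1} \<in> \<pi>" "1 \<le> m" "m \<le> k - 2"
    and N: "N \<ge> 1" and B: "B \<ge> 1"
    and C2N: "\<forall>p q r. p \<in> {1..N} \<longrightarrow> q \<in> {1..N} \<longrightarrow> r \<in> {1..N} \<longrightarrow> card {s \<in> {1..N}. R N (p, q) (r, s)} \<le> B"
  shows "card {i \<in> Eset R N k \<pi>. i ! (m - 1) = i ! (m + 1) \<and> (\<exists>s\<in>{1..k}. s \<noteq> m + 1 \<and> i ! m = i ! (s - 1))}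
     \<le> N * (B ^ k * N ^ (k div 2 - 1) * k)"
proof -
  define CB where "CB = {i \<in> Eset R N k \<pi>. i ! (m - 1) = i ! (m + 1) \<and> (\<exists>s\<in>{1..k}. s \<noteq> m + 1 \<and> i ! m = i ! (s - 1))}"
  define d where "d = m + 1"
  define A' where "A' = rotate d ` CB"
  have CBE: "CB \<subseteq> Eset R N k \<pi>" unfolding CB_def by auto
  have finCB: "finite CB" using Eset_finite CBE finite_subset by blast
  have cardA: "card CB = card A'" unfolding A'_def by (rule card_image[symmetric]) (meson inj_rotate inj_on_subset subset_UNIV)
  have finA: "finite A'" unfolding A'_def using finCB by simp
  have lenA: "\<forall>w\<in>A'. length w = k" unfolding A'_def using CBE unfolding Eset_def by auto
  define g where "g t = (if bdd k d \<pi> t then B else N)" for t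
  define f where "f t = (if t = k - 2 then 1 else if t = k - 1 then k else g t)" for t
  have k0: "k > 0" using k by simp
  have "card A' \<le> card (take 1 ` A') * (\<Prod>t\<in>{1..<k}. f t)"
  proof (rule count_prefix[OF finA lenA])
    show "1 \<le> k" using k by simp
    fix t p assume t: "1 \<le> t" "t < k"
    show "card (ext A' t p) \<le> f t"
    proof (cases "t = k - 2")
      case True
      have "ext A' t p \<subseteq> {p ! 0}"
      proof
        fix x assume "x \<in> ext A' t p"
        then obtain i where i: "i \<in> CB" "take t (rotate d i) = p" "rotate d i ! t = x" unfolding ext_def A'_def by auto
        have li: "length i = k" using i CBE unfolding Eset_def by auto
        have e: "i ! (m - 1) = i ! (m + 1)" using i unfolding CB_def by auto
        have "rotate d i ! t = i ! ((d + t) mod k)" using li t by (simp add: nth_rotate)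
        moreover have "(d + t) mod k = m - 1" using True blk k unfolding d_def using modlem[of "m + 1 + (k - 2)" k] by auto
        moreover have "rotate d i ! 0 = i ! ((d + 0) mod k)" using nth_rotate[of 0 i d] li k by simp
        moreover have "(d + 0) mod k = m + 1" using blk k unfolding d_def by simp
        moreover have "p ! 0 = rotate d i ! 0" using i t True k by auto
        ultimately show "x \<in> {p ! 0}" using i e by simp
      qed
      hence "card (ext A' t p) \<le> 1" using card_mono[of "{p ! 0}"] by fastforce
      thus ?thesis using True unfolding f_def by simp
    next
      case notkm2: False
      show ?thesis
      proof (cases "t = k - 1")
        case True
        have "ext A' t p \<subseteq> set p"
        proof
          fix x assume "x \<in> ext A' t p"
          then obtain i where i: "i \<in> CB" "take t (rotate d i) = p" "rotate d i ! t = x" unfolding ext_def A'_def by auto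
          have li: "length i = k" using i CBE unfolding Eset_def by auto
          obtain s where s: "s \<in> {1..k}" "s \<noteq> m + 1" "i ! m = i ! (s - 1)" using i unfolding CB_def by auto
          have "rotate d i ! t = i ! ((d + t) mod k)" using li t by (simp add: nth_rotate)
          moreover have "(d + t) mod k = m" using True blk k unfolding d_def using modlem[of "m + 1 + (k - 1)" k] by auto
          ultimately have x: "x = i ! (s - 1)" using i s by simp
          define u where "u = (s - 1 + (k - d)) mod k"
          have uk: "u < k" unfolding u_def using k0 by simp
          have "(d + u) mod k = (d + (s - 1 + (k - d))) mod k" unfolding u_def by (rule mod_add_right_eq)
          also have "d + (s - 1 + (k - d)) = s - 1 + k" using blk k s unfolding d_def by auto
          finally have "(d + u) mod k = (s - 1 + k) mod k" .
          also have "(s - 1 + k) mod k = s - 1" using s modlem[of "s - 1 + k" k] by auto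
          finally have du: "(d + u) mod k = s - 1" .
          have ru: "rotate d i ! u = i ! (s - 1)" using li uk du by (simp add: nth_rotate)
          have "u \<noteq> k - 1"
          proof
            assume "u = k - 1"
            hence "(d + u) mod k = m" using blk k unfolding d_def using modlem[of "m + 1 + (k - 1)" k] by auto
            thus False using du s by auto
          qed
          hence "u < t" using uk True by simp
          hence "p ! u = rotate d i ! u" "u < length p" using i li t by auto
          thus "x \<in> set p" using ru x by (metis nth_mem)
        qed
        have "card (ext A' t p) \<le> k"
        proof (cases "ext A' t p = {}")
          case True thus ?thesis by simp
        next
          case False
          then obtain w where "w \<in> A'" "take t w = p" unfolding ext_def by auto
          hence lp: "length p \<le> k" using lenA by auto
          have "card (ext A' t p) \<le> card (set p)" using \<open>ext A' t p \<subseteq> set p\<close> by (intro card_mono) auto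
          also have "\<dots> \<le> length p" by (rule card_length)
          finally show ?thesis using lp by simp
        qed
        thus ?thesis using True notkm2 unfolding f_def by simp
      next
        case False
        have "card (ext A' t p) \<le> g t"
        proof (cases "bdd k d \<pi> t")
          case True
          then obtain u b where ub: "u < t - 1" "b \<in> \<pi>" "posr k d u \<in> b" "posr k d (t - 1) \<in> b"
            unfolding bdd_def by blast
          have "card (ext (rotate d ` CB) t p) \<le> B"
            by (rule ext_bdd[OF CBE k0 t ub C2N])
          thus ?thesis using True unfolding g_def A'_def by simp
        next
          case False
          have "card (ext (rotate d ` CB) t p) \<le> N" by (rule ext_free[OF CBE t(2)])
          thus ?thesis using False unfolding g_def A'_def by simp
        qed
        thus ?thesis using False notkm2 unfolding f_def by simp
      qed
    qed
  qed
  also have "card (take 1 ` A') \<le> N"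
  proof -
    have "take 1 ` A' \<subseteq> (\<lambda>x. [x]) ` {1..N}"
    proof
      fix y assume "y \<in> take 1 ` A'"
      then obtain i where i: "i \<in> CB" "y = take 1 (rotate d i)" unfolding A'_def by auto
      have li: "length i = k" and si: "set i \<subseteq> {1..N}" using i CBE unfolding Eset_def by auto
      have "y = [rotate d i ! 0]" using i take1[of "rotate d i"] li k by simp
      moreover have "rotate d i ! 0 \<in> set (rotate d i)" using li k by (intro nth_mem) simp
      ultimately show "y \<in> (\<lambda>x. [x]) ` {1..N}" using si by auto
    qed
    hence "card (take 1 ` A') \<le> card ((\<lambda>x. [x]) ` {1..N})" by (intro card_mono) auto
    also have "\<dots> \<le> N" using card_image_le[of "{1..N}" "\<lambda>x. [x]"] by simp
    finally show ?thesis .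
  qed
  hence "card (take 1 ` A') * (\<Prod>t\<in>{1..<k}. f t) \<le> N * (\<Prod>t\<in>{1..<k}. f t)"
    by (rule mult_right_mono) simp
  also have "(\<Prod>t\<in>{1..<k}. f t) = (\<Prod>t\<in>{1..<k-2}. g t) * k"
  proof -
    have kk: "k = Suc (Suc (k - 2))" using k by simp
    have a: "(\<Prod>t\<in>{1..<Suc (k - 2)}. f t) = (\<Prod>t\<in>{1..<k-2}. f t) * f (k - 2)"
      by (rule prod.atLeastLessThan_Suc) (use k in simp)
    have b: "(\<Prod>t\<in>{1..<Suc (Suc (k - 2))}. f t) = (\<Prod>t\<in>{1..<Suc (k - 2)}. f t) * f (Suc (k - 2))"
      by (rule prod.atLeastLessThan_Suc) (use k in simp)
    have c: "Suc (k - 2) = k - 1" using k by arith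
    have "(\<Prod>t\<in>{1..<k}. f t) = (\<Prod>t\<in>{1..<k-2}. f t) * f (k - 2) * f (k - 1)"
      using a b c kk by metis
    also have "(\<Prod>t\<in>{1..<k-2}. f t) = (\<Prod>t\<in>{1..<k-2}. g t)" by (rule prod.cong) (auto simp: f_def)
    moreover have "f (k - 2) = 1" "f (k - 1) = k" using k unfolding f_def by auto
    ultimately show ?thesis by simp
  qed
  also have "(\<Prod>t\<in>{1..<k-2}. g t) \<le> B ^ k * N ^ (card \<pi> - 1)"
    unfolding g_def
  proof (rule prod_bound[OF _ N B])
    show "card {t \<in> {1..<k-2}. \<not> bdd k d \<pi> t} \<le> card \<pi> - 1"
    proof (rule free_count[OF pp k0 blk(1)])
      show "{1..<k-2} \<subseteq> {1..<k}" by auto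
      show "\<forall>t\<in>{1..<k-2}. posr k d (t - 1) \<notin> {m, m + 1}"
      proof
        fix t assume t: "t \<in> {1..<k-2}"
        have "t - 1 + d < 2 * k" using t blk unfolding d_def by auto
        thus "posr k d (t - 1) \<notin> {m, m + 1}" unfolding posr_def using modlem[of "t - 1 + d" k] t blk
          unfolding d_def by (auto split: if_splits)
      qed
    qed
  qed auto
  also have "card \<pi> - 1 = k div 2 - 1" using pp_card[OF pp] by simp
  finally show ?thesis using cardA unfolding CB_def by (simp add: mult_left_mono mult_right_mono)
qed

lemma DJ_pp: "pair_partition k \<pi> \<Longrightarrow> DJ \<pi>"
  unfolding pair_partition_def DJ_def by blast

lemma mem_sh: assumes "b \<inter> {m, m+1} = {}" "1 \<le> m" "1 \<le> l"
  shows "l \<in> sh m ` b \<longleftrightarrow> (if l < m then l else l + 2) \<in> b"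
proof
  assume "l \<in> sh m ` b"
  then obtain x where x: "x \<in> b" "l = sh m x" by auto
  show "(if l < m then l else l + 2) \<in> b"
  proof (cases "x > m")
    case True
    hence "l = x - 2" using x unfolding sh_def by simp
    moreover have "x \<noteq> m + 1" using x assms by auto
    moreover have "x - 2 + 2 = x" using True assms(2) by arith
    ultimately show ?thesis using True x by (auto split: if_splits)
  next
    case False
    hence "l = x" using x unfolding sh_def by simp
    moreover have "x \<noteq> m" using x assms by auto
    ultimately show ?thesis using False x by (auto split: if_splits)
  qed
next
  assume a: "(if l < m then l else l + 2) \<in> b"
  show "l \<in> sh m ` b"
  proof (cases "l < m")
    case True
    hence "sh m l = l" unfolding sh_def by simp
    thus ?thesis using a True by (metis image_eqI)
  next
    case False
    hence "sh m (l + 2) = l" unfolding sh_def using assms by simp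
    thus ?thesis using a False by (metis image_eqI)
  qed
qed

lemma del_E:
  assumes pp: "pair_partition k \<pi>" and k: "k \<ge> 4" and blk: "{m, m+1} \<in> \<pi>" "1 \<le> m" "m \<le> k - 2"
    and i: "i \<in> Eset R N k \<pi>" and e: "i ! (m - 1) = i ! (m + 1)"
  shows "del2 m i \<in> Eset R N (k - 2) (remove_block \<pi> m)"
proof -
  have li: "length i = k" and si: "set i \<subseteq> {1..N}" using i unfolding Eset_def by auto
  let ?i' = "del2 m i"
  have li': "length ?i' = k - 2" using li blk by (simp add: length_del2)
  have si': "set ?i' \<subseteq> {1..N}" using si unfolding del2_def by (auto dest: in_set_takeD in_set_dropD)
  define \<sigma> where "\<sigma> l = (if l < m then l else l + 2)" for l
  have nth': "\<And>j. j < k - 2 \<Longrightarrow> ?i' ! j = (if j < m then i ! j else i ! (j + 2))"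
    using nth_del2[of _ i m] li by simp
  have A1: "?i' ! (l - 1) = i ! (\<sigma> l - 1)" if l: "l \<in> {1..k-2}" for l
  proof (cases "l < m")
    case True thus ?thesis using nth'[of "l - 1"] l unfolding \<sigma>_def by auto
  next
    case False
    show ?thesis
    proof (cases "l = m")
      case True thus ?thesis using nth'[of "l - 1"] l e blk unfolding \<sigma>_def by auto
    next
      case False
      thus ?thesis using nth'[of "l - 1"] l \<open>\<not> l < m\<close> unfolding \<sigma>_def by auto
    qed
  qed
  have A2: "?i' ! (l mod (k - 2)) = i ! (\<sigma> l mod k)" if l: "l \<in> {1..k-2}" for l
  proof (cases "l < k - 2")
    case True
    hence lm: "l mod (k - 2) = l" by simp
    show ?thesis
    proof (cases "l < m")
      case True thus ?thesis using nth'[of l] lm \<open>l < k - 2\<close> k unfolding \<sigma>_def by auto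
    next
      case False thus ?thesis using nth'[of l] lm \<open>l < k - 2\<close> k unfolding \<sigma>_def by auto
    qed
  next
    case False
    hence "l = k - 2" using l by auto
    moreover have "\<not> l < m" using blk \<open>l = k - 2\<close> by simp
    moreover have "Suc (Suc (k - 2)) = k" using k by arith
    ultimately show ?thesis using nth'[of 0] k blk unfolding \<sigma>_def by auto
  qed
  have \<sigma>r: "\<sigma> l \<in> {1..k}" "\<sigma> l \<notin> {m, m+1}" if "l \<in> {1..k-2}" for l
    using that k blk unfolding \<sigma>_def by auto
  have D: "DJ \<pi>" using DJ_pp[OF pp] .
  have blkiff: "(\<exists>b'\<in>remove_block \<pi> m. l \<in> b' \<and> l' \<in> b') \<longleftrightarrow> (\<exists>b\<in>\<pi>. \<sigma> l \<in> b \<and> \<sigma> l' \<in> b)"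
    if l: "l \<in> {1..k-2}" "l' \<in> {1..k-2}" for l l'
  proof
    assume "\<exists>b'\<in>remove_block \<pi> m. l \<in> b' \<and> l' \<in> b'"
    then obtain b where b: "b \<in> \<pi>" "b \<noteq> {m, m+1}" "l \<in> sh m ` b" "l' \<in> sh m ` b"
      unfolding remove_block_sh by auto
    have "b \<inter> {m, m+1} = {}" using DJ_D[OF D b(1) blk(1) b(2)] .
    thus "\<exists>b\<in>\<pi>. \<sigma> l \<in> b \<and> \<sigma> l' \<in> b" using mem_sh[of b m] b l blk unfolding \<sigma>_def by auto
  next
    assume "\<exists>b\<in>\<pi>. \<sigma> l \<in> b \<and> \<sigma> l' \<in> b"
    then obtain b where b: "b \<in> \<pi>" "\<sigma> l \<in> b" "\<sigma> l' \<in> b" by auto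
    have bne: "b \<noteq> {m, m+1}" using b \<sigma>r[OF l(1)] by auto
    have "b \<inter> {m, m+1} = {}" using DJ_D[OF D b(1) blk(1) bne] .
    hence "l \<in> sh m ` b" "l' \<in> sh m ` b" using mem_sh[of b m] b l blk unfolding \<sigma>_def by auto
    thus "\<exists>b'\<in>remove_block \<pi> m. l \<in> b' \<and> l' \<in> b'" using b bne unfolding remove_block_sh by auto
  qed
  show ?thesis unfolding Eset_def
  proof (intro CollectI conjI ballI)
    show "length ?i' = k - 2" by (rule li')
    show "set ?i' \<subseteq> {1..N}" by (rule si')
    fix l l' assume l: "l \<in> {1..k-2}" and l': "l' \<in> {1..k-2}"
    have "(\<exists>b\<in>\<pi>. \<sigma> l \<in> b \<and> \<sigma> l' \<in> b) \<longleftrightarrow>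
      R N (i ! (\<sigma> l - 1), i ! (\<sigma> l mod k)) (i ! (\<sigma> l' - 1), i ! (\<sigma> l' mod k))"
      using i \<sigma>r(1)[OF l] \<sigma>r(1)[OF l'] unfolding Eset_def by blast
    thus "(\<exists>b\<in>remove_block \<pi> m. l \<in> b \<and> l' \<in> b) \<longleftrightarrow>
      R N (?i' ! (l - 1), ?i' ! (l mod (k - 2))) (?i' ! (l' - 1), ?i' ! (l' mod (k - 2)))"
      using blkiff[OF l l'] A1[OF l] A1[OF l'] A2[OF l] A2[OF l'] by simp
  qed
qed

lemma one_smallo: "(\<lambda>N::nat. 1::real) \<in> o[at_top](\<lambda>N. real N)"
proof (rule landau_o.smallI)
  fix c :: real assume c: "c > 0"
  show "\<forall>\<^sub>F x in at_top. norm (1::real) \<le> c * norm (real x)"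
    unfolding eventually_at_top_linorder
  proof (intro exI allI impI)
    fix n assume "n \<ge> nat \<lceil>1 / c\<rceil>"
    hence "real n \<ge> 1 / c" by linarith
    thus "norm (1::real) \<le> c * norm (real n)" using c by (simp add: field_simps)
  qed
qed

lemma caseG_bound:
  assumes pp: "pair_partition k \<pi>" and k: "even k" "k \<ge> 4" and blk: "{m, m+1} \<in> \<pi>" "1 \<le> m" "m \<le> k - 2"
  shows "card {i \<in> Ebar R N k \<pi>. i ! (m - 1) = i ! (m + 1) \<and> (\<forall>s\<in>{1..k}. s \<noteq> m + 1 \<longrightarrow> i ! m \<noteq> i ! (s - 1))}
     \<le> card (Ebar R N (k - 2) (remove_block \<pi> m)) * N"
proof -
  define CG where "CG = {i \<in> Ebar R N k \<pi>. i ! (m - 1) = i ! (m + 1) \<and> (\<forall>s\<in>{1..k}. s \<noteq> m + 1 \<longrightarrow> i ! m \<noteq> i ! (s - 1))}"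
  define \<phi> where "\<phi> i = (del2 m i, i ! m)" for i :: "nat list"
  have CGE: "CG \<subseteq> Eset R N k \<pi>" unfolding CG_def Ebar_def by auto
  have finE: "finite (Ebar R N (k - 2) (remove_block \<pi> m))"
    using Eset_finite[of R N "k - 2" "remove_block \<pi> m"] unfolding Ebar_def by simp
  have inj: "inj_on \<phi> CG"
  proof (rule inj_onI)
    fix i1 i2 assume i1: "i1 \<in> CG" and i2: "i2 \<in> CG" and eq: "\<phi> i1 = \<phi> i2"
    have l1: "length i1 = k" and l2: "length i2 = k" using i1 i2 CGE unfolding Eset_def by auto
    have d: "del2 m i1 = del2 m i2" and x: "i1 ! m = i2 ! m" using eq unfolding \<phi>_def by auto
    have e1: "i1 ! (m - 1) = i1 ! (m + 1)" and e2: "i2 ! (m - 1) = i2 ! (m + 1)" using i1 i2 unfolding CG_def by auto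
    have n1: "del2 m i1 ! j = (if j < m then i1 ! j else i1 ! (j + 2))" if "j < k - 2" for j
      using nth_del2[of j i1 m] l1 that by simp
    have n2: "del2 m i2 ! j = (if j < m then i2 ! j else i2 ! (j + 2))" if "j < k - 2" for j
      using nth_del2[of j i2 m] l2 that by simp
    show "i1 = i2"
    proof (rule nth_equalityI)
      show "length i1 = length i2" using l1 l2 by simp
      fix j assume j: "j < length i1"
      consider "j < m" | "j = m" | "j = m + 1" | "j \<ge> m + 2" by linarith
      thus "i1 ! j = i2 ! j"
      proof cases
        case 1 thus ?thesis using n1[of j] n2[of j] d j l1 blk by auto
      next
        case 2 thus ?thesis using x by simp
      next
        case 3
        have "i1 ! (m - 1) = i2 ! (m - 1)" using n1[of "m - 1"] n2[of "m - 1"] d blk k by auto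
        thus ?thesis using 3 e1 e2 by simp
      next
        case 4
        have jl: "j - 2 < k - 2" and jm: "\<not> j - 2 < m" using j l1 4 by auto
        have "i1 ! (j - 2 + 2) = i2 ! (j - 2 + 2)" using n1[OF jl] n2[OF jl] d jm by simp
        moreover have "j - 2 + 2 = j" using 4 by arith
        ultimately show ?thesis by simp
      qed
    qed
  qed
  have img: "\<phi> ` CG \<subseteq> Ebar R N (k - 2) (remove_block \<pi> m) \<times> {1..N}"
  proof
    fix y assume "y \<in> \<phi> ` CG"
    then obtain i where i: "i \<in> CG" "y = \<phi> i" by auto
    have iE: "i \<in> Eset R N k \<pi>" and na: "\<not> adopted \<pi> i" using i unfolding CG_def Ebar_def by auto
    have e: "i ! (m - 1) = i ! (m + 1)" and u: "\<forall>s\<in>{1..k}. s \<noteq> m + 1 \<longrightarrow> i ! m \<noteq> i ! (s - 1)"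
      using i unfolding CG_def by auto
    have li: "length i = k" and si: "set i \<subseteq> {1..N}" using iE unfolding Eset_def by auto
    have dE: "del2 m i \<in> Eset R N (k - 2) (remove_block \<pi> m)" by (rule del_E[OF pp k(2) blk iE e])
    obtain q where q: "k = 2 * q" using k(1) by (elim evenE)
    define n where "n = q - 2"
    have n: "k = 2 * n + 4" using q k(2) unfolding n_def by simp
    have "\<not> adopted (remove_block \<pi> m) (del2 m i)"
    proof
      assume ad: "adopted (remove_block \<pi> m) (del2 m i)"
      have "length (del2 m i) = 2 * n + 2" using li n blk by (simp add: length_del2)
      hence ad': "adopted_aux (Suc n) (remove_block \<pi> m) (del2 m i)" using ad unfolding adopted_def by simp
      have c1: "length i = 2 * n + 4" using li n by simp
      have c2: "m + 2 \<le> length i" using li blk k by simp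
      have c3: "\<forall>s\<in>{1..length i}. s \<noteq> m + 1 \<longrightarrow> i ! m \<noteq> i ! (s - 1)" using u li by simp
      have "adopted_aux (Suc (Suc n)) \<pi> i"
        by (rule conf[OF c1 DJ_pp[OF pp] blk(1) blk(2) c2 e c3 ad'])
      thus False using na li n unfolding adopted_def by simp
    qed
    hence "del2 m i \<in> Ebar R N (k - 2) (remove_block \<pi> m)" using dE unfolding Ebar_def by simp
    moreover have "i ! m \<in> set i" using li blk k by (intro nth_mem) simp
    hence "i ! m \<in> {1..N}" using si by blast
    ultimately show "y \<in> Ebar R N (k - 2) (remove_block \<pi> m) \<times> {1..N}" using i unfolding \<phi>_def by simp
  qed
  have "card CG = card (\<phi> ` CG)" using card_image[OF inj] by simp
  also have "\<dots> \<le> card (Ebar R N (k - 2) (remove_block \<pi> m) \<times> {1..N})"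
    by (rule card_mono) (use finE img in auto)
  also have "\<dots> = card (Ebar R N (k - 2) (remove_block \<pi> m)) * N" by (simp add: card_cartesian_product)
  finally show ?thesis unfolding CG_def .
qed


theorem mainTheorem6:
  fixes R :: "nat \<Rightarrow> nat \<times> nat \<Rightarrow> nat \<times> nat \<Rightarrow> bool"
    and k m :: nat and \<pi> :: "nat set set"
  assumes equiv_R: "\<And>N. equiv ({1..N} \<times> {1..N})
                      {(x, y). x \<in> {1..N} \<times> {1..N} \<and> y \<in> {1..N} \<times> {1..N} \<and> R N x y}"
    and swap_R: "\<And>N p q. p \<in> {1..N} \<Longrightarrow> q \<in> {1..N} \<Longrightarrow> R N (p, q) (q, p)"
    and C2: "\<exists>B::nat. \<forall>N p q r. p \<in> {1..N} \<longrightarrow> q \<in> {1..N} \<longrightarrow> r \<in> {1..N} \<longrightarrow>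
               card {s \<in> {1..N}. R N (p, q) (r, s)} \<le> B"
    and C3: "(\<lambda>N. real (card {(p, q, r). p \<in> {1..N} \<and> q \<in> {1..N} \<and> r \<in> {1..N} \<and>
                                   R N (p, q) (q, r) \<and> r \<noteq> p}))
             \<in> o[at_top](\<lambda>N. real N ^ 2)"
    and k: "even k" "k \<ge> 4"
    and \<pi>: "NCPP k \<pi>"
    and blk: "{m, m + 1} \<in> \<pi>" "1 \<le> m" "m \<le> k - 2"
  shows "\<exists>g :: nat \<Rightarrow> real. g \<in> o[at_top](\<lambda>N. real N ^ (1 + k div 2)) \<and>
           (\<forall>\<^sub>F N in at_top. real (card (Ebar R N k \<pi>))
              \<le> real N * real (card (Ebar R N (k - 2) (remove_block \<pi> m))) + g N)"
proof -
  obtain B0 :: nat where B0: "\<forall>N p q r. p \<in> {1..N} \<longrightarrow> q \<in> {1..N} \<longrightarrow> r \<in> {1..N} \<longrightarrow>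
               card {s \<in> {1..N}. R N (p, q) (r, s)} \<le> B0" using C2 by blast
  define B where "B = max B0 1"
  have B1: "B \<ge> 1" unfolding B_def by simp
  have C2B: "\<forall>p q r. p \<in> {1..N} \<longrightarrow> q \<in> {1..N} \<longrightarrow> r \<in> {1..N} \<longrightarrow>
               card {s \<in> {1..N}. R N (p, q) (r, s)} \<le> B" for N
    using B0 unfolding B_def by (meson le_trans max.cobounded1)
  have pp: "pair_partition k \<pi>" using \<pi> unfolding NCPP_def by simp
  define h where "h = k div 2"
  have h2: "h \<ge> 2" unfolding h_def using k by auto
  define CA where "CA N = {i \<in> Eset R N k \<pi>. i ! (m - 1) \<noteq> i ! (m + 1)}" for N
  define CB where "CB N = {i \<in> Eset R N k \<pi>. i ! (m - 1) = i ! (m + 1) \<and> (\<exists>s\<in>{1..k}. s \<noteq> m + 1 \<and> i ! m = i ! (s - 1))}" for N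
  define CG where "CG N = {i \<in> Ebar R N k \<pi>. i ! (m - 1) = i ! (m + 1) \<and> (\<forall>s\<in>{1..k}. s \<noteq> m + 1 \<longrightarrow> i ! m \<noteq> i ! (s - 1))}" for N
  define g where "g N = real (card (CA N)) + real (card (CB N))" for N
  have ineq: "real (card (Ebar R N k \<pi>)) \<le> real N * real (card (Ebar R N (k - 2) (remove_block \<pi> m))) + g N" for N
  proof -
    have fin: "finite (CA N)" "finite (CB N)" "finite (CG N)"
      using Eset_finite[of R N k \<pi>] unfolding CA_def CB_def CG_def Ebar_def by auto
    have "Ebar R N k \<pi> \<subseteq> CA N \<union> CB N \<union> CG N" unfolding CA_def CB_def CG_def Ebar_def by auto
    hence "card (Ebar R N k \<pi>) \<le> card (CA N \<union> CB N \<union> CG N)" using fin by (intro card_mono) auto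
    also have "\<dots> \<le> card (CA N) + card (CB N) + card (CG N)"
      by (meson add_mono card_Un_le le_trans order_refl)
    also have "card (CG N) \<le> card (Ebar R N (k - 2) (remove_block \<pi> m)) * N"
      unfolding CG_def by (rule caseG_bound[OF pp k blk])
    finally have "card (Ebar R N k \<pi>) \<le> card (CA N) + card (CB N) + card (Ebar R N (k - 2) (remove_block \<pi> m)) * N"
      by simp
    hence "real (card (Ebar R N k \<pi>)) \<le> real (card (CA N)) + real (card (CB N)) + real (card (Ebar R N (k - 2) (remove_block \<pi> m))) * real N"
      by (metis of_nat_add of_nat_le_iff of_nat_mult)
    thus ?thesis unfolding g_def by (simp add: algebra_simps)
  qed
  have C3': "(\<lambda>N. real (card (TS R N))) \<in> o[at_top](\<lambda>N. real N ^ 2)" using C3 unfolding TS_def .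
  have pw: "real N ^ 2 * real N ^ (h - 1) = real N ^ (1 + k div 2)" for N
    using h2 unfolding h_def by (simp add: power_add[symmetric])
  have gA: "(\<lambda>N. real (card (CA N))) \<in> o[at_top](\<lambda>N. real N ^ (1 + k div 2))"
  proof -
    have "(\<lambda>N. real (card (CA N))) \<in> O[at_top](\<lambda>N. real (card (TS R N)) * real N ^ (h - 1))"
    proof (rule landau_o.bigI)
      show "(0::real) < real (B ^ k) + 1" by (rule add_nonneg_pos) simp_all
      show "\<forall>\<^sub>F N in at_top. norm (real (card (CA N))) \<le> (real (B ^ k) + 1) * norm (real (card (TS R N)) * real N ^ (h - 1))"
        unfolding eventually_at_top_linorder
      proof (intro exI[of _ 1] allI impI)
        fix N :: nat assume N: "N \<ge> 1"
        have "card (CA N) \<le> card (TS R N) * (B ^ k * N ^ (h - 1))"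
          unfolding CA_def h_def by (rule caseA_bound[where R=R and N=N and B=B, OF pp k(2) blk N B1 C2B[of N]])
        hence "real (card (CA N)) \<le> real (card (TS R N)) * (real (B ^ k) * real N ^ (h - 1))"
          by (metis of_nat_le_iff of_nat_mult of_nat_power)
        also have "\<dots> \<le> (real (B ^ k) + 1) * (real (card (TS R N)) * real N ^ (h - 1))"
          by (simp add: algebra_simps)
        finally show "norm (real (card (CA N))) \<le> (real (B ^ k) + 1) * norm (real (card (TS R N)) * real N ^ (h - 1))"
          by simp
      qed
    qed
    moreover have "(\<lambda>N. real (card (TS R N)) * real N ^ (h - 1)) \<in> o[at_top](\<lambda>N. real N ^ 2 * real N ^ (h - 1))"
      by (rule landau_o.small_big_mult[OF C3' landau_o.big_refl])
    ultimately show ?thesis unfolding pw by (rule landau_o.big_small_trans)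
  qed
  have gB: "(\<lambda>N. real (card (CB N))) \<in> o[at_top](\<lambda>N. real N ^ (1 + k div 2))"
  proof -
    have "(\<lambda>N. real (card (CB N))) \<in> O[at_top](\<lambda>N. real N ^ h)"
    proof (rule landau_o.bigI)
      show "(0::real) < real (B ^ k * k) + 1" by (rule add_nonneg_pos) simp_all
      show "\<forall>\<^sub>F N in at_top. norm (real (card (CB N))) \<le> (real (B ^ k * k) + 1) * norm (real N ^ h)"
        unfolding eventually_at_top_linorder
      proof (intro exI[of _ 1] allI impI)
        fix N :: nat assume N: "N \<ge> 1"
        have "card (CB N) \<le> N * (B ^ k * N ^ (h - 1) * k)"
          unfolding CB_def h_def by (rule caseB_bound[where R=R and N=N and B=B, OF pp k(2) blk N B1 C2B[of N]])
        also have "N * (B ^ k * N ^ (h - 1) * k) = B ^ k * k * N ^ h"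
          using h2 by (cases h) (auto simp: algebra_simps)
        finally have "real (card (CB N)) \<le> real (B ^ k * k) * real N ^ h"
          by (metis of_nat_le_iff of_nat_mult of_nat_power)
        also have "\<dots> \<le> (real (B ^ k * k) + 1) * real N ^ h" by (simp add: algebra_simps)
        finally show "norm (real (card (CB N))) \<le> (real (B ^ k * k) + 1) * norm (real N ^ h)" by simp
      qed
    qed
    moreover have "(\<lambda>N. real N ^ h * 1) \<in> o[at_top](\<lambda>N. real N ^ h * real N)"
      by (rule landau_o.big_small_mult[OF landau_o.big_refl one_smallo])
    moreover have "(\<lambda>N. real N ^ h * real N) = (\<lambda>N. real N ^ (1 + k div 2))"
      unfolding h_def by (simp add: algebra_simps)
    ultimately show ?thesis by (metis (no_types, lifting) landau_o.big_small_trans mult_1_right ext)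
  qed
  have "g \<in> o[at_top](\<lambda>N. real N ^ (1 + k div 2))"
    unfolding g_def by (rule sum_in_smallo(1)[OF gA gB])
  moreover have "\<forall>\<^sub>F N in at_top. real (card (Ebar R N k \<pi>))
              \<le> real N * real (card (Ebar R N (k - 2) (remove_block \<pi> m))) + g N"
    using ineq by simp
  ultimately show ?thesis by blast
qed

end
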